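(* Let $G$ be an undirected unweighted graph on $n\ge 2$ vertices with strong connectivity $k\ge 1$ such that no vertex-induced subgraph of $G$ has strong connectivity at least $2k$. Then $G$ has $\Theta(nk)$ edges, i.e. there are absolute constants $a,b>0$ with $ank\le |E(G)|\le bnk$.
   Context: The strong connectivity of a graph is the size of its minimum cut (the minimum, over $\emptyset\ne S\subsetneq V$, of the number of edges between $S$ and $V\setminus S$); a graph is strongly $k$-connected if it has no cut of size less than $k$. Subgraphs considered are vertex-induced subgraphs on at least two vertices. *)

theory Defs
  imports Complex_Main
begin

definition simple_graph :: "'a set \<Rightarrow> 'a set set \<Rightarrow> bool" where
  "simple_graph V E \<longleftrightarrow> finite V \<and>
     (\<forall>e\<in>E. \<exists>u v. e = {u, v} \<and> u \<noteq> v \<and> u \<in> V \<and> v \<in> V)"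

definition cut_size :: "'a set set \<Rightarrow> 'a set \<Rightarrow> nat" where
  "cut_size E S = card {e\<in>E. e \<inter> S \<noteq> {} \<and> \<not> e \<subseteq> S}"

definition strong_conn :: "'a set \<Rightarrow> 'a set set \<Rightarrow> nat" where
  "strong_conn V E = Min {cut_size E S | S. S \<noteq> {} \<and> S \<subset> V}"

definition induced_edges :: "'a set set \<Rightarrow> 'a set \<Rightarrow> 'a set set" where
  "induced_edges E W = {e\<in>E. e \<subseteq> W}"

end

theory Submission
  imports Defs
begin

lemma sc_fin:
  assumes "finite W"
  shows "finite {cut_size F S | S. S \<noteq> {} \<and> S \<subset> W}"
proof -
  have "{cut_size F S | S. S \<noteq> {} \<and> S \<subset> W} \<subseteq> (cut_size F) ` Pow W" by auto
  thus ?thesis using assms by (meson finite_Pow_iff finite_imageI finite_subset)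
qed

lemma sc_le:
  assumes "finite W" "S \<noteq> {}" "S \<subset> W"
  shows "strong_conn W F \<le> cut_size F S"
  unfolding strong_conn_def using assms sc_fin[OF assms(1)] by (intro Min_le) auto

lemma sc_ex:
  assumes "finite W" "card W \<ge> 2"
  shows "\<exists>S. S \<noteq> {} \<and> S \<subset> W \<and> cut_size F S = strong_conn W F"
proof -
  obtain w where w: "w \<in> W" using assms by fastforce
  have "{w} \<noteq> W" using assms by auto
  hence ne: "{cut_size F S | S. S \<noteq> {} \<and> S \<subset> W} \<noteq> {}" using w by blast
  have "strong_conn W F \<in> {cut_size F S | S. S \<noteq> {} \<and> S \<subset> W}"
    unfolding strong_conn_def using Min_in[OF sc_fin[OF assms(1)] ne] .
  thus ?thesis by auto
qed

lemma ind_ind: "S \<subseteq> W \<Longrightarrow> induced_edges (induced_edges E W) S = induced_edges E S"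
  unfolding induced_edges_def by auto

lemma upper:
  assumes sg: "simple_graph V E"
    and H: "\<forall>W. W \<subseteq> V \<and> card W \<ge> 2 \<longrightarrow> strong_conn W (induced_edges E W) < 2 * k"
  shows "W \<subseteq> V \<Longrightarrow> W \<noteq> {} \<Longrightarrow> card (induced_edges E W) \<le> (2*k-1) * (card W - 1)"
proof (induction "card W" arbitrary: W rule: less_induct)
  case less
  have finV: "finite V" using sg unfolding simple_graph_def by blast
  have finW: "finite W" using less.prems finV finite_subset by blast
  have finE: "finite E"
  proof -
    have "E \<subseteq> Pow V"
    proof
      fix e assume "e \<in> E"
      then obtain u v where "e = {u,v}" "u \<in> V" "v \<in> V" using sg unfolding simple_graph_def by blast
      thus "e \<in> Pow V" by simp
    qed
    moreover have "finite (Pow V)" using finV by simp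
    ultimately show ?thesis by (rule finite_subset)
  qed
  show ?case
  proof (cases "card W \<ge> 2")
    case False
    have "card W > 0" using finW less.prems by auto
    hence "card W = 1" using False by linarith
    then obtain w where "W = {w}" using card_1_singletonE by blast
    have "induced_edges E W = {}"
    proof -
      { fix e assume "e \<in> E" "e \<subseteq> {w}"
        then obtain u v where "e = {u,v}" "u \<noteq> v" using sg unfolding simple_graph_def by blast
        with \<open>e \<subseteq> {w}\<close> have False by auto }
      thus ?thesis unfolding induced_edges_def using \<open>W = {w}\<close> by auto
    qed
    thus ?thesis by simp
  next
    case True
    let ?F = "induced_edges E W"
    obtain S where S: "S \<noteq> {}" "S \<subset> W" "cut_size ?F S = strong_conn W ?F"
      using sc_ex[OF finW True] by blast
    have "W \<subseteq> V \<and> card W \<ge> 2" using less.prems(1) True by blast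
    hence "strong_conn W ?F < 2 * k" using H by blast
    hence cut: "cut_size ?F S \<le> 2*k-1" using S(3) by linarith
    define T where "T = W - S"
    have T: "T \<noteq> {}" "T \<subseteq> W" "T \<subset> W" using S T_def by auto
    have cS: "card S < card W" using S(2) finW psubset_card_mono by blast
    have cT: "card T < card W" using T(3) finW psubset_card_mono by blast
    have finS: "finite S" using S(2) finW finite_subset by blast
    have cST: "card S + card T = card W" unfolding T_def using S(2) finW finS card_Diff_subset[OF finS] cS
      by auto
    have cS1: "card S \<ge> 1" using finS S(1) by (simp add: Suc_le_eq card_gt_0_iff)
    have finT: "finite T" unfolding T_def using finW by simp
    have cT1: "card T \<ge> 1" using finT T(1) by (simp add: Suc_le_eq card_gt_0_iff)
    have IS: "card (induced_edges E S) \<le> (2*k-1) * (card S - 1)"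
      using less.hyps[OF cS] S less.prems by auto
    have IT: "card (induced_edges E T) \<le> (2*k-1) * (card T - 1)"
      using less.hyps[OF cT] T less.prems by auto
    have split: "?F \<subseteq> induced_edges E S \<union> induced_edges E T \<union> {e\<in>?F. e \<inter> S \<noteq> {} \<and> \<not> e \<subseteq> S}"
      unfolding induced_edges_def T_def by auto
    have finF: "finite ?F" using finE unfolding induced_edges_def by auto
    have fin2: "finite (induced_edges E S)" "finite (induced_edges E T)"
      using finE unfolding induced_edges_def by auto
    have "card ?F \<le> card (induced_edges E S \<union> induced_edges E T \<union> {e\<in>?F. e \<inter> S \<noteq> {} \<and> \<not> e \<subseteq> S})"
      using split fin2 finF by (intro card_mono) auto
    also have "\<dots> \<le> card (induced_edges E S \<union> induced_edges E T) + cut_size ?F S"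
      unfolding cut_size_def by (rule card_Un_le)
    also have "\<dots> \<le> card (induced_edges E S) + card (induced_edges E T) + cut_size ?F S"
      using card_Un_le[of "induced_edges E S" "induced_edges E T"] by linarith
    also have "\<dots> \<le> (2*k-1) * (card S - 1) + (2*k-1) * (card T - 1) + (2*k-1)"
      using IS IT cut by linarith
    also have "\<dots> = (2*k-1) * ((card S - 1) + (card T - 1) + 1)"
      by (simp add: distrib_left)
    also have "(card S - 1) + (card T - 1) + 1 = card W - 1"
      using cST cS1 cT1 by linarith
    finally show ?thesis .
  qed
qed


lemma EPow: "simple_graph V E \<Longrightarrow> E \<subseteq> Pow V"
proof
  fix e assume "simple_graph V E" "e \<in> E"
  then obtain u v where "e = {u,v}" "u \<in> V" "v \<in> V" unfolding simple_graph_def by blast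
  thus "e \<in> Pow V" by simp
qed

lemma card2: "simple_graph V E \<Longrightarrow> e \<in> E \<Longrightarrow> card e = 2"
proof -
  assume "simple_graph V E" "e \<in> E"
  then obtain u v where "e = {u,v}" "u \<noteq> v" unfolding simple_graph_def by blast
  thus "card e = 2" by simp
qed

lemma handshake:
  assumes sg: "simple_graph V E"
  shows "(\<Sum>v\<in>V. card {e\<in>E. v \<in> e}) = 2 * card E"
proof -
  have finV: "finite V" using sg unfolding simple_graph_def by blast
  have EP: "E \<subseteq> Pow V" using EPow[OF sg] .
  have finE: "finite E" using EP finV finite_subset by (metis finite_Pow_iff)
  have fe: "\<And>e. e \<in> E \<Longrightarrow> finite e" using EP finV finite_subset by blast
  have eq: "prod.swap ` (SIGMA e:E. e) = (SIGMA v:V. {e\<in>E. v \<in> e})"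
    using EP by (auto simp: image_iff) blast
  have "(\<Sum>v\<in>V. card {e\<in>E. v \<in> e}) = card (SIGMA v:V. {e\<in>E. v \<in> e})"
    using finV finE by (subst card_SigmaI) auto
  also have "\<dots> = card (SIGMA e:E. e)" unfolding eq[symmetric]
    by (rule card_image) (simp add: swap_inj_on)
  also have "\<dots> = (\<Sum>e\<in>E. card e)" using finE fe by (subst card_SigmaI) auto
  also have "\<dots> = (\<Sum>e\<in>E. 2)" using card2[OF sg] by (intro sum.cong) auto
  finally show ?thesis by simp
qed

lemma deg:
  assumes sg: "simple_graph V E" and c: "card V \<ge> 2" and v: "v \<in> V"
  shows "strong_conn V E \<le> card {e\<in>E. v \<in> e}"
proof -
  have finV: "finite V" using sg unfolding simple_graph_def by blast
  have "{v} \<noteq> V" using c by auto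
  hence "strong_conn V E \<le> cut_size E {v}" using v finV by (intro sc_le) auto
  also have "{e\<in>E. e \<inter> {v} \<noteq> {} \<and> \<not> e \<subseteq> {v}} = {e\<in>E. v \<in> e}"
  proof -
    { fix e assume "e \<in> E" "e \<subseteq> {v}"
      then obtain a b where "e = {a,b}" "a \<noteq> b" using sg unfolding simple_graph_def by blast
      with \<open>e \<subseteq> {v}\<close> have False by auto }
    thus ?thesis by blast
  qed
  hence "cut_size E {v} = card {e\<in>E. v \<in> e}" unfolding cut_size_def by simp
  finally show ?thesis .
qed

theorem mainTheorem11:
  "\<exists>a b :: real. a > 0 \<and> b > 0 \<and>
    (\<forall>(V :: nat set) (E :: nat set set) (k :: nat).
       simple_graph V E \<and> card V \<ge> 2 \<and> k \<ge> 1 \<and> strong_conn V E = k \<and>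
       (\<forall>W. W \<subseteq> V \<and> card W \<ge> 2 \<longrightarrow> strong_conn W (induced_edges E W) < 2 * k)
       \<longrightarrow> a * real (card V) * real k \<le> real (card E) \<and>
           real (card E) \<le> b * real (card V) * real k)"
proof -
 have X: "\<forall>(V :: nat set) (E :: nat set set) (k :: nat).
       simple_graph V E \<and> card V \<ge> 2 \<and> k \<ge> 1 \<and> strong_conn V E = k \<and>
       (\<forall>W. W \<subseteq> V \<and> card W \<ge> 2 \<longrightarrow> strong_conn W (induced_edges E W) < 2 * k)
       \<longrightarrow> 1/2 * real (card V) * real k \<le> real (card E) \<and>
           real (card E) \<le> 2 * real (card V) * real k"
 proof (intro allI impI)
  fix V :: "nat set" and E :: "nat set set" and k :: nat
  assume A: "simple_graph V E \<and> card V \<ge> 2 \<and> k \<ge> 1 \<and> strong_conn V E = k \<and>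
       (\<forall>W. W \<subseteq> V \<and> card W \<ge> 2 \<longrightarrow> strong_conn W (induced_edges E W) < 2 * k)"
  hence sg: "simple_graph V E" and c: "card V \<ge> 2" and k: "strong_conn V E = k"
    and H: "\<forall>W. W \<subseteq> V \<and> card W \<ge> 2 \<longrightarrow> strong_conn W (induced_edges E W) < 2 * k" by auto
  have "(\<Sum>v\<in>V. k) \<le> (\<Sum>v\<in>V. card {e\<in>E. v \<in> e})"
    using deg[OF sg c] k by (intro sum_mono) auto
  hence "card V * k \<le> 2 * card E" using handshake[OF sg] by simp
  hence "real (card V * k) \<le> real (2 * card E)" by (rule of_nat_mono)
  hence L: "1/2 * real (card V) * real k \<le> real (card E)" by simp
  have "induced_edges E V = E" using EPow[OF sg] unfolding induced_edges_def by auto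
  moreover have "V \<noteq> {}" using c by auto
  ultimately have "card E \<le> (2*k-1) * (card V - 1)" using upper[OF sg H, of V] by auto
  also have "\<dots> \<le> (2*k) * card V" by (intro mult_le_mono) auto
  also have "\<dots> = 2 * card V * k" by simp
  finally have "real (card E) \<le> real (2 * card V * k)" by (rule of_nat_mono)
  hence "real (card E) \<le> 2 * real (card V) * real k" by simp
  with L show "1/2 * real (card V) * real k \<le> real (card E) \<and> real (card E) \<le> 2 * real (card V) * real k" by blast
 qed
 show ?thesis by (rule exI[of _ "1/2"], rule exI[of _ "2::real"], intro conjI) (simp, simp, rule X)
qed

end
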